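(* For every integer $N\ge 1$, the number of tuples $(\mu_1,\dots,\mu_4;d_1,\dots,d_4)\in P^4\times\mathbb Z^4$ with $d_1+d_2+d_3+d_4$ odd and $$6\sum_{i=1}^4|\mu_i|+6\sum_{i=1}^4\binom{d_i}{2}+d_1+d_2+3d_3+3d_4=N$$ equals the number of tuples $(\alpha_1,\dots,\alpha_4;e_1,\dots,e_4)\in P^4\times\mathbb Z^4$ with $e_1+e_2+e_3+e_4$ odd and $$6\sum_{i=1}^4|\alpha_i|+6\sum_{i=1}^4\binom{e_i}{2}+0e_1+0e_2+2e_3+2e_4+1=N.$$
   Context: $P$ denotes the set of all integer partitions into positive parts (including the empty partition); for a partition $\lambda$, $|\lambda|$ is the sum of its parts. For $d\in\mathbb Z$, $\binom{d}{2}=d(d-1)/2$. *)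

theory Defs
  imports Main "HOL-Library.Multiset"
begin

definition partitions :: "nat multiset set" where
  "partitions = {\<mu>. \<forall>x\<in>#\<mu>. 0 < x}"

definition psize :: "nat multiset \<Rightarrow> int" where
  "psize \<mu> = int (sum_mset \<mu>)"

definition binom2 :: "int \<Rightarrow> int" where
  "binom2 d = d * (d - 1) div 2"

end

theory Submission
  imports Defs
begin

definition fwd :: "int \<Rightarrow> int \<Rightarrow> int \<Rightarrow> int \<Rightarrow> int \<times> int \<times> int \<times> int" where
  "fwd a b c d = ((a-b+c+d+1) div 2, (-a+b+c+d+1) div 2, (-a-b+c-d+1) div 2, (-a-b-c+d+1) div 2)"

definition bwd :: "int \<Rightarrow> int \<Rightarrow> int \<Rightarrow> int \<Rightarrow> int \<times> int \<times> int \<times> int" where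
  "bwd a b c d = ((a-b-c-d+1) div 2, (-a+b-c-d+1) div 2, (a+b+c-d-1) div 2, (a+b-c+d-1) div 2)"

lemma binom2_eq: "6 * binom2 d = 3*d*d - 3*d"
proof -
  have "even (d*(d-1))" by auto
  then obtain k where k: "d*(d-1) = 2*k" by (rule evenE)
  then have "binom2 d = k" unfolding binom2_def by simp
  then show ?thesis using k by (simp add: algebra_simps)
qed

lemma fwd_odd:
  assumes "odd (a+b+c+d)" "fwd a b c d = (e1,e2,e3,e4)"
  shows "odd (e1+e2+e3+e4)" and "bwd e1 e2 e3 e4 = (a,b,c,d)"
   and "6 * (binom2 e1 + binom2 e2 + binom2 e3 + binom2 e4) + 0*e1 + 0*e2 + 2*e3 + 2*e4 + 1
        = 6 * (binom2 a + binom2 b + binom2 c + binom2 d) + a + b + 3*c + 3*d"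
proof -
  have h1: "2*e1 = a-b+c+d+1" and h2: "2*e2 = -a+b+c+d+1" and h3: "2*e3 = -a-b+c-d+1"
    and h4: "2*e4 = -a-b-c+d+1"
  proof -
    have q: "e1 = (a-b+c+d+1) div 2" "e2 = (-a+b+c+d+1) div 2" "e3 = (-a-b+c-d+1) div 2"
      "e4 = (-a-b-c+d+1) div 2" using assms(2) unfolding fwd_def by auto
    show "2*e1 = a-b+c+d+1" using q(1) assms(1) by presburger
    show "2*e2 = -a+b+c+d+1" using q(2) assms(1) by presburger
    show "2*e3 = -a-b+c-d+1" using q(3) assms(1) by presburger
    show "2*e4 = -a-b-c+d+1" using q(4) assms(1) by presburger
  qed
  have "e1+e2+e3+e4 = -a-b+c+d+2" using h1 h2 h3 h4 by linarith
  then show "odd (e1+e2+e3+e4)" using assms(1) by presburger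
  have "e1-e2-e3-e4+1 = 2*a" "-e1+e2-e3-e4+1 = 2*b" "e1+e2+e3-e4-1 = 2*c" "e1+e2-e3+e4-1 = 2*d"
    using h1 h2 h3 h4 by linarith+
  then show "bwd e1 e2 e3 e4 = (a,b,c,d)" unfolding bwd_def by simp
  have "4*(3*e1*e1 - 3*e1 + (3*e2*e2 - 3*e2) + (3*e3*e3 - 3*e3) + (3*e4*e4 - 3*e4) + 2*e3 + 2*e4 + 1)
     = 4*(3*a*a - 3*a + (3*b*b - 3*b) + (3*c*c - 3*c) + (3*d*d - 3*d) + a + b + 3*c + 3*d)"
    using h1 h2 h3 h4 by algebra
  then show "6 * (binom2 e1 + binom2 e2 + binom2 e3 + binom2 e4) + 0*e1 + 0*e2 + 2*e3 + 2*e4 + 1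
        = 6 * (binom2 a + binom2 b + binom2 c + binom2 d) + a + b + 3*c + 3*d"
    by (simp add: distrib_left binom2_eq)
qed

lemma bwd_odd:
  assumes "odd (e1+e2+e3+e4)" "bwd e1 e2 e3 e4 = (a,b,c,d)"
  shows "odd (a+b+c+d)" and "fwd a b c d = (e1,e2,e3,e4)"
proof -
  have h1: "2*a = e1-e2-e3-e4+1" and h2: "2*b = -e1+e2-e3-e4+1" and h3: "2*c = e1+e2+e3-e4-1"
    and h4: "2*d = e1+e2-e3+e4-1"
  proof -
    have q: "a = (e1-e2-e3-e4+1) div 2" "b = (-e1+e2-e3-e4+1) div 2" "c = (e1+e2+e3-e4-1) div 2"
      "d = (e1+e2-e3+e4-1) div 2" using assms(2) unfolding bwd_def by auto
    show "2*a = e1-e2-e3-e4+1" using q(1) assms(1) by presburger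
    show "2*b = -e1+e2-e3-e4+1" using q(2) assms(1) by presburger
    show "2*c = e1+e2+e3-e4-1" using q(3) assms(1) by presburger
    show "2*d = e1+e2-e3+e4-1" using q(4) assms(1) by presburger
  qed
  have "a+b+c+d = e1+e2-e3-e4" using h1 h2 h3 h4 by linarith
  then show "odd (a+b+c+d)" using assms(1) by presburger
  have "a-b+c+d+1 = 2*e1" "-a+b+c+d+1 = 2*e2" "-a-b+c-d+1 = 2*e3" "-a-b-c+d+1 = 2*e4"
    using h1 h2 h3 h4 by linarith+
  then show "fwd a b c d = (e1,e2,e3,e4)" unfolding fwd_def by simp
qed

theorem lemma3p5:
  fixes N :: int
  assumes "N \<ge> 1"
  shows "card {((m1, m2, m3, m4), (d1, d2, d3, d4)).
            m1 \<in> partitions \<and> m2 \<in> partitions \<and> m3 \<in> partitions \<and> m4 \<in> partitions \<and>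
            odd (d1 + d2 + d3 + d4) \<and>
            6 * (psize m1 + psize m2 + psize m3 + psize m4)
            + 6 * (binom2 d1 + binom2 d2 + binom2 d3 + binom2 d4)
            + d1 + d2 + 3 * d3 + 3 * d4 = N}
       = card {((a1, a2, a3, a4), (e1, e2, e3, e4)).
            a1 \<in> partitions \<and> a2 \<in> partitions \<and> a3 \<in> partitions \<and> a4 \<in> partitions \<and>
            odd (e1 + e2 + e3 + e4) \<and>
            6 * (psize a1 + psize a2 + psize a3 + psize a4)
            + 6 * (binom2 e1 + binom2 e2 + binom2 e3 + binom2 e4)
            + 0 * e1 + 0 * e2 + 2 * e3 + 2 * e4 + 1 = N}"
  (is "card ?A = card ?B")
proof (rule bij_betw_same_card)
  let ?F = "\<lambda>(ms, (d1,d2,d3,d4)). (ms, fwd d1 d2 d3 d4)"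
  let ?G = "\<lambda>(ms, (e1,e2,e3,e4)). (ms, bwd e1 e2 e3 e4)"
  show "bij_betw ?F ?A ?B"
  proof (rule bij_betw_byWitness[where f' = ?G])
    show "\<forall>x\<in>?A. ?G (?F x) = x"
    proof
      fix x assume "x \<in> ?A"
      obtain m1 m2 m3 m4 a b c d where x: "x = ((m1,m2,m3,m4),(a,b,c,d))" by (metis prod.exhaust prod_cases4)
      define ms where "ms = (m1,m2,m3,m4)"
      have o: "odd (a+b+c+d)" using \<open>x \<in> ?A\<close> unfolding x by (auto simp only: mem_Collect_eq case_prod_conv)
      have x: "x = (ms,(a,b,c,d))" using x ms_def by simp
      obtain e1 e2 e3 e4 where f: "fwd a b c d = (e1,e2,e3,e4)" by (metis prod_cases4)
      show "?G (?F x) = x" using fwd_odd(2)[OF o f] x f by simp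
    qed
    show "\<forall>y\<in>?B. ?F (?G y) = y"
    proof
      fix y assume "y \<in> ?B"
      obtain m1 m2 m3 m4 a b c d where x: "y = ((m1,m2,m3,m4),(a,b,c,d))" by (metis prod.exhaust prod_cases4)
      define ms where "ms = (m1,m2,m3,m4)"
      have o: "odd (a+b+c+d)" using \<open>y \<in> ?B\<close> unfolding x by (auto simp only: mem_Collect_eq case_prod_conv)
      have x: "y = (ms,(a,b,c,d))" using x ms_def by simp
      obtain e1 e2 e3 e4 where f: "bwd a b c d = (e1,e2,e3,e4)" by (metis prod_cases4)
      show "?F (?G y) = y" using bwd_odd(2)[OF o f] x f by simp
    qed
    show "?F ` ?A \<subseteq> ?B"
    proof
      fix y assume "y \<in> ?F ` ?A"
      then obtain x where "x \<in> ?A" and y: "y = ?F x" by blast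
      obtain m1 m2 m3 m4 a b c d where x: "x = ((m1,m2,m3,m4),(a,b,c,d))" by (metis prod.exhaust prod_cases4)
      have o: "odd (a+b+c+d)"
        and P: "m1 \<in> partitions \<and> m2 \<in> partitions \<and> m3 \<in> partitions \<and> m4 \<in> partitions"
        and E: "6 * (psize m1 + psize m2 + psize m3 + psize m4)
            + 6 * (binom2 a + binom2 b + binom2 c + binom2 d)
            + a + b + 3 * c + 3 * d = N" using \<open>x \<in> ?A\<close> unfolding x by (auto simp only: mem_Collect_eq case_prod_conv)+
      obtain e1 e2 e3 e4 where f: "fwd a b c d = (e1,e2,e3,e4)" by (metis prod_cases4)
      show "y \<in> ?B" using fwd_odd(1,3)[OF o f] x y f P E by simp
    qed
    show "?G ` ?B \<subseteq> ?A"
    proof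
      fix y assume "y \<in> ?G ` ?B"
      then obtain x where "x \<in> ?B" and y: "y = ?G x" by blast
      obtain m1 m2 m3 m4 a b c d where x: "x = ((m1,m2,m3,m4),(a,b,c,d))" by (metis prod.exhaust prod_cases4)
      have o: "odd (a+b+c+d)"
        and P: "m1 \<in> partitions \<and> m2 \<in> partitions \<and> m3 \<in> partitions \<and> m4 \<in> partitions"
        and E: "6 * (psize m1 + psize m2 + psize m3 + psize m4)
            + 6 * (binom2 a + binom2 b + binom2 c + binom2 d)
            + 0 * a + 0 * b + 2 * c + 2 * d + 1 = N" using \<open>x \<in> ?B\<close> unfolding x by (auto simp only: mem_Collect_eq case_prod_conv)+
      obtain e1 e2 e3 e4 where f: "bwd a b c d = (e1,e2,e3,e4)" by (metis prod_cases4)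
      have o2: "odd (e1+e2+e3+e4)" and f2: "fwd e1 e2 e3 e4 = (a,b,c,d)" using bwd_odd[OF o f] by auto
      show "y \<in> ?A" using fwd_odd(3)[OF o2 f2] o2 x y f P E by simp
    qed
  qed
qed

end
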